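(* Let $R\ge 2$, $s=R+2$, and let $r$ be any positive integer. Then $\mathrm{Perf}(s,r,R)=\emptyset$, i.e. there is no non-trivial $R$-perfect code in $\mathbb F_q^{s\times r}$ with respect to the NRT metric.
   Context: $q$ is a prime power, $\mathbb F_q^{s\times r}$ the set of $s\times r$ matrices over $\mathbb F_q$ with rows in $\mathbb F_q^{1\times r}$. For a row $y=(y_1,\dots,y_r)$, the NRT weight is $w(y)=\max\{j: y_j\neq 0\}$ if $y\ne0$ and $w(0)=0$; for a matrix, $w(x)=\sum_i w(x_i)$. The NRT metric is $d(x,y)=w(x-y)$; $B(c,R)=\{x: d(x,c)\le R\}$. A code $C$ is $R$-perfect if the balls $B(c,R)$, $c\in C$, are pairwise disjoint and cover $\mathbb F_q^{s\times r}$; non-trivial means $|C|>1$ and $C\ne\mathbb F_q^{s\times r}$. $\mathrm{Perf}(s,r,R)$ is the set of non-trivial $R$-perfect codes in $\mathbb F_q^{s\times r}$. *)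

theory Defs
  imports Main
begin

text \<open>Matrices over a field 'a, indexed from 1: row i in {1..s}, column j in {1..r}.
  Entries outside this range are required to be 0 (see nrt_space).\<close>

type_synonym 'a mat = "nat \<Rightarrow> nat \<Rightarrow> 'a"

definition row_weight :: "nat \<Rightarrow> (nat \<Rightarrow> 'a::zero) \<Rightarrow> nat" where
  "row_weight r y = (if \<exists>j\<in>{1..r}. y j \<noteq> 0 then Max {j\<in>{1..r}. y j \<noteq> 0} else 0)"

definition nrt_weight :: "nat \<Rightarrow> nat \<Rightarrow> 'a::zero mat \<Rightarrow> nat" where
  "nrt_weight s r x = (\<Sum>i=1..s. row_weight r (x i))"

definition nrt_dist :: "nat \<Rightarrow> nat \<Rightarrow> 'a::ab_group_add mat \<Rightarrow> 'a mat \<Rightarrow> nat" where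
  "nrt_dist s r x y = nrt_weight s r (\<lambda>i j. x i j - y i j)"

definition nrt_space :: "nat \<Rightarrow> nat \<Rightarrow> 'a::zero mat set" where
  "nrt_space s r = {x. \<forall>i j. x i j \<noteq> 0 \<longrightarrow> i \<in> {1..s} \<and> j \<in> {1..r}}"

definition nrt_ball :: "nat \<Rightarrow> nat \<Rightarrow> 'a::ab_group_add mat \<Rightarrow> nat \<Rightarrow> 'a mat set" where
  "nrt_ball s r c R = {x \<in> nrt_space s r. nrt_dist s r x c \<le> R}"

definition perfect_code :: "nat \<Rightarrow> nat \<Rightarrow> nat \<Rightarrow> 'a::ab_group_add mat set \<Rightarrow> bool" where
  "perfect_code s r R C \<longleftrightarrow>
     C \<subseteq> nrt_space s r \<and>
     (\<forall>c\<in>C. \<forall>c'\<in>C. c \<noteq> c' \<longrightarrow> nrt_ball s r c R \<inter> nrt_ball s r c' R = {}) \<and>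
     (\<Union>c\<in>C. nrt_ball s r c R) = nrt_space s r"

definition Perf :: "nat \<Rightarrow> nat \<Rightarrow> nat \<Rightarrow> 'a::ab_group_add mat set set" where
  "Perf s r R = {C. perfect_code s r R C \<and> card C > 1 \<and> C \<noteq> nrt_space s r}"

end

theory Submission
  imports Defs
begin

lemma rw_ge:
  assumes "j \<in> {1..r}" "f j \<noteq> 0"
  shows "j \<le> row_weight r f"
  unfolding row_weight_def using assms by (auto intro!: Max_ge)

lemma rw_le:
  assumes "\<And>j. j \<in> {1..r} \<Longrightarrow> f j \<noteq> 0 \<Longrightarrow> j \<le> k"
  shows "row_weight r f \<le> k"
  unfolding row_weight_def using assms
  by (auto intro!: Max.boundedI)

lemma rw_ultra:
  "row_weight r (\<lambda>j. a j - b j) \<le> max (row_weight r a) (row_weight r (b::nat\<Rightarrow>'a::ab_group_add))"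
proof (rule rw_le)
  fix j assume j: "j \<in> {1..r}" "a j - b j \<noteq> 0"
  show "j \<le> max (row_weight r a) (row_weight r b)"
  proof (cases "a j = 0")
    case True
    then have "b j \<noteq> 0" using j by auto
    then show ?thesis using rw_ge[OF j(1), of b] by simp
  next
    case False
    then show ?thesis using rw_ge[OF j(1), of a] by simp
  qed
qed

lemma rw_zero0: "row_weight r (\<lambda>j. 0) = 0"
  by (rule le_0_eq[THEN iffD1], rule rw_le) auto

lemma rw_swap:
  "row_weight r (\<lambda>j. a j - b j) = row_weight r (\<lambda>j. b j - (a j::'a::ab_group_add))"
proof -
  have "\<And>a b::nat\<Rightarrow>'a. row_weight r (\<lambda>j. a j - b j) \<le> row_weight r (\<lambda>j. b j - a j)"
  proof -
    fix a b :: "nat \<Rightarrow> 'a"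
    have "row_weight r (\<lambda>j. 0 - (b j - a j)) \<le> max (row_weight r (\<lambda>j. 0::'a)) (row_weight r (\<lambda>j. b j - a j))"
      by (rule rw_ultra)
    then show "row_weight r (\<lambda>j. a j - b j) \<le> row_weight r (\<lambda>j. b j - a j)"
      by (simp add: rw_zero0)
  qed
  then show ?thesis by (meson antisym)
qed

definition Em :: "nat \<Rightarrow> nat \<Rightarrow> 'a::field mat" where
  "Em s z = (\<lambda>i j. if i \<in> {1..s} \<and> i \<noteq> z \<and> j = 1 then 1 else 0)"

lemma wE_le: "row_weight r (Em s z i) \<le> 1"
  by (rule rw_le) (auto simp: Em_def split: if_splits)

lemma wE_z: "row_weight r (Em s z z) = 0"
  by (rule le_0_eq[THEN iffD1], rule rw_le) (auto simp: Em_def)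

lemma wE_1:
  assumes "r \<ge> 1" "i \<in> {1..s}" "i \<noteq> z"
  shows "row_weight r (Em s z i :: nat \<Rightarrow> 'a::field) = 1"
proof (rule antisym)
  show "row_weight r (Em s z i :: nat \<Rightarrow> 'a) \<le> 1" by (rule wE_le)
  show "1 \<le> row_weight r (Em s z i :: nat \<Rightarrow> 'a)"
    by (rule rw_ge) (use assms in \<open>auto simp: Em_def\<close>)
qed

lemma count_sum:
  assumes "finite A"
  shows "(\<Sum>i\<in>A. if i \<in> B then 0 else (1::nat)) = card (A - B)"
  using assms by (simp add: sum.If_cases Diff_eq)

lemma part:
  fixes C :: "'a::ab_group_add mat set"
  assumes pc: "perfect_code s r R C" and c: "c \<in> C" and c': "c' \<in> C"
    and A: "(\<Sum>i=1..s. if i \<in> S then row_weight r (\<lambda>j. c' i j - c i j) else 0) \<le> R"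
    and B: "(\<Sum>i=1..s. if i \<in> S then 0 else row_weight r (\<lambda>j. c' i j - c i j)) \<le> R"
  shows "c = c'"
proof (rule ccontr)
  assume ne: "c \<noteq> c'"
  define p where "p = (\<lambda>i j. if i \<in> S then c' i j else c i j)"
  have sub: "C \<subseteq> nrt_space s r" using pc unfolding perfect_code_def by blast
  have psp: "p \<in> nrt_space s r"
    using sub c c' unfolding p_def nrt_space_def by auto
  have d1: "nrt_dist s r p c = (\<Sum>i=1..s. if i \<in> S then row_weight r (\<lambda>j. c' i j - c i j) else 0)"
    unfolding nrt_dist_def nrt_weight_def p_def
    by (rule sum.cong) (auto simp: rw_zero0)
  have d2: "nrt_dist s r p c' = (\<Sum>i=1..s. if i \<in> S then 0 else row_weight r (\<lambda>j. c' i j - c i j))"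
    unfolding nrt_dist_def nrt_weight_def p_def
    by (rule sum.cong) (auto simp: rw_zero0 rw_swap)
  have "p \<in> nrt_ball s r c R \<inter> nrt_ball s r c' R"
    unfolding nrt_ball_def using psp d1 d2 A B by auto
  then show False using pc ne c c' unfolding perfect_code_def by blast
qed

lemma cover_struct:
  fixes C :: "'a::field mat set"
  assumes pc: "perfect_code s r R C" and s: "s = R+2" and R: "R \<ge> 2" and r: "r \<ge> 1"
    and c0: "c0 \<in> C" and c: "c \<in> C" and z: "z \<in> {1..s}" and j0: "j0 \<in> {1..s}" "j0 \<noteq> z"
    and cov: "nrt_dist s r (\<lambda>i j. c0 i j + Em s z i j) c \<le> R"
  shows "(\<forall>i\<in>{1..s}. i \<noteq> z \<longrightarrow> row_weight r (\<lambda>j. c0 i j + Em s z i j - c i j) = 0)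
    \<and> 2 \<le> row_weight r (\<lambda>j. c0 z j + Em s z z j - c z j)
    \<and> row_weight r (\<lambda>j. c0 z j + Em s z z j - c z j) \<le> R"
proof -
  define u where "u i = (\<lambda>j. c0 i j + Em s z i j - c i j)" for i
  define D where "D i = (\<lambda>j. c i j - c0 i j)" for i
  have Du: "D i = (\<lambda>j. Em s z i j - u i j)" for i
    unfolding D_def u_def by (rule ext) (simp add: algebra_simps)
  have wD: "row_weight r (D i) \<le> max (row_weight r (Em s z i :: nat \<Rightarrow> 'a)) (row_weight r (u i))" for i
    unfolding Du using rw_ultra[of r "Em s z i" "u i"] by simp
  have hu: "(\<Sum>i=1..s. row_weight r (u i)) \<le> R"
    using cov unfolding nrt_dist_def nrt_weight_def u_def by simp
  note wE_le' = wE_le[where 'a='a] and wE_z' = wE_z[where 'a='a] and wE_1' = wE_1[where 'a='a]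
  have card1: "card ({1..s} - {z}) = R+1" using z s by simp
  have cne: "c \<noteq> c0"
  proof
    assume "c = c0"
    then have ue: "u i = Em s z i" for i unfolding u_def by auto
    have "(\<Sum>i=1..s. row_weight r (u i)) = (\<Sum>i=1..s. if i \<in> {z} then 0 else (1::nat))"
      by (rule sum.cong) (use wE_1'[OF r] in \<open>auto simp: ue wE_z'\<close>)
    also have "\<dots> = R+1" using count_sum[of "{1..s}" "{z}"] card1 by simp
    finally show False using hu by simp
  qed
  have step1: "\<forall>i\<in>{1..s}. i \<noteq> z \<longrightarrow> row_weight r (u i) = 0"
  proof (rule ccontr)
    assume "\<not> ?thesis"
    then obtain i1 where i1: "i1 \<in> {1..s}" "i1 \<noteq> z" "row_weight r (u i1) \<noteq> 0" by auto
    let ?S = "{i. row_weight r (u i) \<noteq> 0}"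
    have "(\<Sum>i=1..s. if i \<in> ?S then row_weight r (D i) else 0) \<le> (\<Sum>i=1..s. row_weight r (u i))"
    proof (rule sum_mono)
      fix i
      show "(if i \<in> ?S then row_weight r (D i) else 0) \<le> row_weight r (u i)"
        using wD[of i] wE_le'[of r s z i] by auto
    qed
    with hu have A: "(\<Sum>i=1..s. if i \<in> ?S then row_weight r (D i) else 0) \<le> R" by simp
    have "(\<Sum>i=1..s. if i \<in> ?S then 0 else row_weight r (D i)) \<le> (\<Sum>i=1..s. if i \<in> {z,i1} then 0 else (1::nat))"
    proof (rule sum_mono)
      fix i
      show "(if i \<in> ?S then 0 else row_weight r (D i)) \<le> (if i \<in> {z,i1} then 0 else (1::nat))"
        using wD[of i] wE_le'[of r s z i] wE_z'[of r s z] i1 by auto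
    qed
    also have "\<dots> = card ({1..s} - {z,i1})" by (rule count_sum) simp
    also have "\<dots> = R" using s z i1 by (simp add: card_Diff_subset)
    finally have B: "(\<Sum>i=1..s. if i \<in> ?S then 0 else row_weight r (D i)) \<le> R" .
    from part[OF pc c0 c A[unfolded D_def] B[unfolded D_def]] cne show False by simp
  qed
  have wuz: "row_weight r (u z) \<le> R"
    using hu member_le_sum[of z "{1..s}" "\<lambda>i. row_weight r (u i)"] z by simp
  have step2: "2 \<le> row_weight r (u z)"
  proof (rule ccontr)
    assume "\<not> ?thesis"
    then have lt: "row_weight r (u z) + 1 \<le> R" using R by simp
    have "(\<Sum>i=1..s. if i \<in> {z,j0} then row_weight r (D i) else 0) = (\<Sum>i\<in>{1..s} \<inter> {z,j0}. row_weight r (D i))"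
      by (rule sum.inter_restrict[symmetric]) simp
    also have "\<dots> = row_weight r (D z) + row_weight r (D j0)"
      using z j0 by (simp add: Int_absorb1)
    also have "\<dots> \<le> row_weight r (u z) + 1"
      using wD[of z] wD[of j0] wE_z'[of r s z] wE_le'[of r s z j0] step1 j0 by auto
    finally have A: "(\<Sum>i=1..s. if i \<in> {z,j0} then row_weight r (D i) else 0) \<le> R" using lt by simp
    have "(\<Sum>i=1..s. if i \<in> {z,j0} then 0 else row_weight r (D i)) \<le> (\<Sum>i=1..s. if i \<in> {z,j0} then 0 else (1::nat))"
    proof (rule sum_mono)
      fix i assume i: "i \<in> {1..s}"
      show "(if i \<in> {z,j0} then 0 else row_weight r (D i)) \<le> (if i \<in> {z,j0} then 0 else (1::nat))"
        using wD[of i] wE_le'[of r s z i] step1 i by auto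
    qed
    also have "\<dots> = card ({1..s} - {z,j0})" by (rule count_sum) simp
    also have "\<dots> = R" using s z j0 by (simp add: card_Diff_subset)
    finally have B: "(\<Sum>i=1..s. if i \<in> {z,j0} then 0 else row_weight r (D i)) \<le> R" .
    from part[OF pc c0 c A[unfolded D_def] B[unfolded D_def]] cne show False by simp
  qed
  show ?thesis using step1 step2 wuz unfolding u_def by simp
qed


lemma no_perfect:
  fixes C :: "'a::field mat set" and R r :: nat
  assumes R: "R \<ge> 2" and r: "r \<ge> 1"
  shows "\<not> perfect_code (R+2) r R C"
proof
  assume pc: "perfect_code (R+2) r R C"
  define s where "s = R+2"
  have pc': "perfect_code s r R C" using pc s_def by simp
  have sub: "C \<subseteq> nrt_space s r" and cover: "(\<Union>c\<in>C. nrt_ball s r c R) = nrt_space s r"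
    using pc' unfolding perfect_code_def by auto
  have "(\<lambda>i j. 0::'a) \<in> nrt_space s r" by (simp add: nrt_space_def)
  then obtain c0 where c0: "c0 \<in> C" using cover by auto
  have ysp: "(\<lambda>i j. c0 i j + Em s z i j) \<in> nrt_space s r" for z
  proof -
    have "c0 \<in> nrt_space s r" using sub c0 by auto
    then show ?thesis using r unfolding nrt_space_def Em_def by auto
  qed
  obtain c1 where c1: "c1 \<in> C" and cov1: "nrt_dist s r (\<lambda>i j. c0 i j + Em s 1 i j) c1 \<le> R"
    using ysp[of 1] cover unfolding nrt_ball_def by auto
  obtain c2 where c2: "c2 \<in> C" and cov2: "nrt_dist s r (\<lambda>i j. c0 i j + Em s 2 i j) c2 \<le> R"
    using ysp[of 2] cover unfolding nrt_ball_def by auto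
  have in1: "(1::nat) \<in> {1..s}" and in2: "(2::nat) \<in> {1..s}" using s_def by auto
  define u1 where "u1 i = (\<lambda>j. c0 i j + Em s 1 i j - c1 i j)" for i
  define u2 where "u2 i = (\<lambda>j. c0 i j + Em s 2 i j - c2 i j)" for i
  have S1: "(\<forall>i\<in>{1..s}. i \<noteq> 1 \<longrightarrow> row_weight r (u1 i) = 0) \<and> 2 \<le> row_weight r (u1 1) \<and> row_weight r (u1 1) \<le> R"
    using cover_struct[OF pc' s_def R r c0 c1 in1 in2 _ cov1] unfolding u1_def by simp
  have S2: "(\<forall>i\<in>{1..s}. i \<noteq> 2 \<longrightarrow> row_weight r (u2 i) = 0) \<and> 2 \<le> row_weight r (u2 2) \<and> row_weight r (u2 2) \<le> R"
    using cover_struct[OF pc' s_def R r c0 c2 in2 in1 _ cov2] unfolding u2_def by simp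
  define D1 where "D1 i = (\<lambda>j. Em s 1 i j - u1 i j)" for i
  define D2 where "D2 i = (\<lambda>j. Em s 2 i j - u2 i j)" for i
  have D1e: "D1 i j = c1 i j - c0 i j" for i j unfolding D1_def u1_def by (simp add: algebra_simps)
  have D2e: "D2 i j = c2 i j - c0 i j" for i j unfolding D2_def u2_def by (simp add: algebra_simps)
  have wD1: "row_weight r (D1 i) \<le> max (row_weight r (Em s 1 i :: nat \<Rightarrow> 'a)) (row_weight r (u1 i))" for i
    unfolding D1_def using rw_ultra[of r "Em s 1 i" "u1 i"] by simp
  have wD2: "row_weight r (D2 i) \<le> max (row_weight r (Em s 2 i :: nat \<Rightarrow> 'a)) (row_weight r (u2 i))" for i
    unfolding D2_def using rw_ultra[of r "Em s 2 i" "u2 i"] by simp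
  note wE_le' = wE_le[where 'a='a] and wE_z' = wE_z[where 'a='a]
  have bD1: "row_weight r (D1 i) \<le> R" if "i \<in> {1..s}" for i
    using wD1[of i] wE_le'[of r s 1 i] wE_z'[of r s 1] S1 that R by (cases "i = 1") auto
  have bD2: "row_weight r (D2 i) \<le> R" if "i \<in> {1..s}" for i
    using wD2[of i] wE_le'[of r s 2 i] wE_z'[of r s 2] S2 that R by (cases "i = 2") auto
  define Dl where "Dl i = (\<lambda>j. c1 i j - c2 i j)" for i
  have Dle: "Dl i = (\<lambda>j. D1 i j - D2 i j)" for i unfolding Dl_def D1e D2e by (simp add: algebra_simps)
  have bDl: "row_weight r (Dl i) \<le> R" if "i \<in> {1..s}" for i
    unfolding Dle using rw_ultra[of r "D1 i" "D2 i"] bD1[OF that] bD2[OF that] by simp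
  have zDl: "row_weight r (Dl i) = 0" if "i \<in> {1..s}" "i \<noteq> 1" "i \<noteq> 2" for i
  proof -
    have "Dl i = (\<lambda>j. u2 i j - u1 i j)"
      unfolding Dle D1_def D2_def using that by (auto simp: Em_def)
    then show ?thesis using rw_ultra[of r "u2 i" "u1 i"] S1 S2 that by simp
  qed
  have "(\<Sum>i=1..s. if i \<in> {1} then row_weight r (Dl i) else 0) = (\<Sum>i\<in>{1..s} \<inter> {1}. row_weight r (Dl i))"
    by (rule sum.inter_restrict[symmetric]) simp
  also have "\<dots> = row_weight r (Dl 1)" using in1 by (simp add: Int_absorb1)
  also have "\<dots> \<le> R" using bDl[OF in1] .
  finally have A: "(\<Sum>i=1..s. if i \<in> {1} then row_weight r (Dl i) else 0) \<le> R" .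
  have "(\<Sum>i=1..s. if i \<in> {1} then 0 else row_weight r (Dl i)) \<le> (\<Sum>i=1..s. if i \<in> {2} then R else 0)"
  proof (rule sum_mono)
    fix i assume i: "i \<in> {1..s}"
    show "(if i \<in> {1} then 0 else row_weight r (Dl i)) \<le> (if i \<in> {2} then R else 0)"
      using bDl[OF i] zDl[OF i] by auto
  qed
  also have "\<dots> = (\<Sum>i\<in>{1..s} \<inter> {2}. R)" by (rule sum.inter_restrict[symmetric]) simp
  also have "\<dots> = R" using in2 by (simp add: Int_absorb1)
  finally have B: "(\<Sum>i=1..s. if i \<in> {1} then 0 else row_weight r (Dl i)) \<le> R" .
  have eq: "c2 = c1" using part[OF pc' c2 c1 A[unfolded Dl_def] B[unfolded Dl_def]] .
  have "D1 1 = D2 1" using eq by (auto simp: D1e D2e)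
  moreover have "row_weight r (D2 1) \<le> 1"
    using wD2[of 1] wE_le'[of r s 2 1] S2 in1 by auto
  moreover have "row_weight r (u1 1) \<le> row_weight r (D1 1)"
  proof -
    have "u1 1 = (\<lambda>j. 0 - D1 1 j)" unfolding D1_def by (auto simp: Em_def)
    then show ?thesis using rw_ultra[of r "\<lambda>j. 0" "D1 1"] by (simp add: rw_zero0)
  qed
  ultimately show False using S1 by simp
qed

theorem mainTheorem13:
  fixes R r :: nat
  assumes "R \<ge> 2" and "r \<ge> 1"
  shows "(Perf (R + 2) r R :: ('a::{finite,field}) mat set set) = {}"
  using no_perfect[OF assms] unfolding Perf_def by auto

end
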